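(* Let $(X,d)$ be a compact metric space and $F:X\to 2^X$ a continuous, onto set-valued map. The following are equivalent: (a) $F$ has the shadowing property. (b) For every $\varepsilon>0$ there exist $\delta>0$ and $N\in\mathbb N$ such that for every $\delta$-pseudo-orbit $\{x_n\}_{n\ge0}$ of $F$ for which there are points $x_i^N\in F^N(x_i)$ with $d(x_i^N,x_{i+N})<\varepsilon/2$ for all $i\ge0$, the sequence $\{x_{n+N}\}_{n\ge0}$ is $\varepsilon$-shadowed by some $F$-orbit. (c) For every $\varepsilon>0$ there exist $\delta>0$ and $N\in\mathbb N$ such that for every $\delta$-pseudo-orbit $\{x_n\}_{n\ge0}$ of $F$ for which there are points $x_i^N\in F^N(x_i)$ with $d(x_i^N,x_{i+N})<\varepsilon/2$ for all $i\ge0$, the sequence $\{x_n^N\}_{n\ge0}$ is $\varepsilon$-shadowed by some $F$-orbit.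
   Context: $2^X$ is the family of nonempty compact subsets of $X$. $F$ is upper semicontinuous if for every $x$ and open $U\supset F(x)$ there is a neighborhood $V$ of $x$ with $F(y)\subset U$ for $y\in V$; lower semicontinuous if for every $x$ and open $U$ with $F(x)\cap U\ne\emptyset$ there is a neighborhood $V$ of $x$ with $F(y)\cap U\neq\emptyset$ for $y\in V$; continuous if both. $F$ is onto if every $y\in X$ lies in some $F(x)$. For $A\subset X$, $F(A)=\bigcup_{a\in A}F(a)$; $F^1=F$ and $F^{N}(x)=F(F^{N-1}(x))$. A $\delta$-pseudo-orbit of $F$ is $\{x_n\}_{n\ge0}$ with $d(x_{n+1},F(x_n))<\delta$ for all $n$; an $F$-orbit is $(y_n)_{n\ge0}$ with $y_{n+1}\in F(y_n)$; a sequence $\{z_n\}$ is $\varepsilon$-shadowed by the $F$-orbit $(y_n)$ if $d(z_n,y_n)<\varepsilon$ for all $n$. $F$ has the shadowing property if for every $\varepsilon>0$ there is $\delta>0$ such that every $\delta$-pseudo-orbit is $\varepsilon$-shadowed by some $F$-orbit. *)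

theory Defs
  imports "HOL-Analysis.Analysis"
begin

definition set_valued_map :: "'a::metric_space set \<Rightarrow> ('a \<Rightarrow> 'a set) \<Rightarrow> bool" where
  "set_valued_map X F \<longleftrightarrow> (\<forall>x\<in>X. F x \<noteq> {} \<and> compact (F x) \<and> F x \<subseteq> X)"

definition usc_on :: "'a::metric_space set \<Rightarrow> ('a \<Rightarrow> 'a set) \<Rightarrow> bool" where
  "usc_on X F \<longleftrightarrow> (\<forall>x\<in>X. \<forall>U. open U \<and> F x \<subseteq> U \<longrightarrow>
      (\<exists>V. open V \<and> x \<in> V \<and> (\<forall>y\<in>V \<inter> X. F y \<subseteq> U)))"

definition lsc_on :: "'a::metric_space set \<Rightarrow> ('a \<Rightarrow> 'a set) \<Rightarrow> bool" where
  "lsc_on X F \<longleftrightarrow> (\<forall>x\<in>X. \<forall>U. open U \<and> F x \<inter> U \<noteq> {} \<longrightarrow>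
      (\<exists>V. open V \<and> x \<in> V \<and> (\<forall>y\<in>V \<inter> X. F y \<inter> U \<noteq> {})))"

definition svm_continuous_on :: "'a::metric_space set \<Rightarrow> ('a \<Rightarrow> 'a set) \<Rightarrow> bool" where
  "svm_continuous_on X F \<longleftrightarrow> usc_on X F \<and> lsc_on X F"

definition svm_onto :: "'a set \<Rightarrow> ('a \<Rightarrow> 'a set) \<Rightarrow> bool" where
  "svm_onto X F \<longleftrightarrow> (\<forall>y\<in>X. \<exists>x\<in>X. y \<in> F x)"

fun Fpow :: "('a \<Rightarrow> 'a set) \<Rightarrow> nat \<Rightarrow> 'a \<Rightarrow> 'a set" where
  "Fpow F 0 x = {x}"
| "Fpow F (Suc n) x = \<Union> (F ` Fpow F n x)"

definition pseudo_orbit :: "'a::metric_space set \<Rightarrow> ('a \<Rightarrow> 'a set) \<Rightarrow> real \<Rightarrow> (nat \<Rightarrow> 'a) \<Rightarrow> bool" where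
  "pseudo_orbit X F \<delta> x \<longleftrightarrow> (\<forall>n. x n \<in> X) \<and> (\<forall>n. infdist (x (Suc n)) (F (x n)) < \<delta>)"

definition F_orbit :: "'a set \<Rightarrow> ('a \<Rightarrow> 'a set) \<Rightarrow> (nat \<Rightarrow> 'a) \<Rightarrow> bool" where
  "F_orbit X F y \<longleftrightarrow> (\<forall>n. y n \<in> X) \<and> (\<forall>n. y (Suc n) \<in> F (y n))"

definition shadowed_by :: "real \<Rightarrow> (nat \<Rightarrow> 'a::metric_space) \<Rightarrow> (nat \<Rightarrow> 'a) \<Rightarrow> bool" where
  "shadowed_by \<epsilon> z y \<longleftrightarrow> (\<forall>n. dist (z n) (y n) < \<epsilon>)"

definition has_shadowing :: "'a::metric_space set \<Rightarrow> ('a \<Rightarrow> 'a set) \<Rightarrow> bool" where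
  "has_shadowing X F \<longleftrightarrow> (\<forall>\<epsilon>>0. \<exists>\<delta>>0. \<forall>x. pseudo_orbit X F \<delta> x \<longrightarrow>
      (\<exists>y. F_orbit X F y \<and> shadowed_by \<epsilon> x y))"

end

theory Submission
  imports Defs
begin

lemma Fpow_subset:
  assumes "set_valued_map X F" "x \<in> X"
  shows "Fpow F n x \<subseteq> X"
proof (induction n)
  case 0 then show ?case using assms by simp
next
  case (Suc n) then show ?case using assms(1) unfolding set_valued_map_def by auto
qed

lemma infdist_lessE:
  assumes "infdist x S < d" "S \<noteq> {}"
  shows "\<exists>s\<in>S. dist x s < d"
proof -
  have "Inf ((\<lambda>a. dist x a) ` S) < d" using assms by (simp add: infdist_def)
  then show ?thesis using cInf_lessD[of "(\<lambda>a. dist x a) ` S" d] assms(2) by auto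
qed

lemma local_lsc:
  assumes sv: "set_valued_map X F" and c: "svm_continuous_on X F" and eta: "\<eta> > 0" and a: "a \<in> X"
  shows "\<exists>W. open W \<and> a \<in> W \<and> (\<forall>y\<in>W\<inter>X. \<forall>b\<in>W\<inter>X. \<forall>u\<in>F y. \<exists>v\<in>F b. dist u v < \<eta>)"
proof -
  have cF: "compact (F a)" using sv a unfolding set_valued_map_def by auto
  have "F a \<subseteq> (\<Union>p\<in>F a. ball p (\<eta>/4))" using eta by auto
  then obtain P where P: "P \<subseteq> F a" "finite P" "F a \<subseteq> (\<Union>p\<in>P. ball p (\<eta>/4))"
    using compactE_image[OF cF, of "F a" "\<lambda>p. ball p (\<eta>/4)"] by auto
  have "\<forall>p\<in>P. \<exists>V. open V \<and> a \<in> V \<and> (\<forall>y\<in>V\<inter>X. F y \<inter> ball p (\<eta>/4) \<noteq> {})"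
  proof
    fix p assume "p \<in> P"
    then have "F a \<inter> ball p (\<eta>/4) \<noteq> {}" using P eta by auto
    then show "\<exists>V. open V \<and> a \<in> V \<and> (\<forall>y\<in>V\<inter>X. F y \<inter> ball p (\<eta>/4) \<noteq> {})"
      using c a unfolding svm_continuous_on_def lsc_on_def by auto
  qed
  then obtain V where V: "\<And>p. p \<in> P \<Longrightarrow> open (V p) \<and> a \<in> V p \<and> (\<forall>y\<in>V p\<inter>X. F y \<inter> ball p (\<eta>/4) \<noteq> {})"
    by (metis (no_types, lifting))
  obtain V0 where V0: "open V0" "a \<in> V0" "\<forall>y\<in>V0\<inter>X. F y \<subseteq> (\<Union>p\<in>P. ball p (\<eta>/4))"
  proof -
    have "open (\<Union>p\<in>P. ball p (\<eta>/4))" by (intro open_UN) auto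
    moreover have "usc_on X F" using c unfolding svm_continuous_on_def by simp
    ultimately show ?thesis using a P(3) that unfolding usc_on_def by blast
  qed
  define W where "W = V0 \<inter> (\<Inter>p\<in>P. V p)"
  have "open W" unfolding W_def using V0 V P(2) by (intro open_Int open_INT) auto
  moreover have "a \<in> W" unfolding W_def using V0 V by auto
  moreover have "\<forall>y\<in>W\<inter>X. \<forall>b\<in>W\<inter>X. \<forall>u\<in>F y. \<exists>v\<in>F b. dist u v < \<eta>"
  proof (intro ballI)
    fix y b u assume y: "y \<in> W \<inter> X" and b: "b \<in> W \<inter> X" and u: "u \<in> F y"
    then obtain p where p: "p \<in> P" "dist p u < \<eta>/4" using V0(3) unfolding W_def by fastforce
    then have "F b \<inter> ball p (\<eta>/4) \<noteq> {}" using V b unfolding W_def by auto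
    then obtain v where v: "v \<in> F b" "dist p v < \<eta>/4" by auto
    have "dist u v \<le> dist p u + dist p v" using dist_triangle3[of u v p] by simp
    then show "\<exists>v\<in>F b. dist u v < \<eta>" using v p eta by (intro bexI[of _ v]) auto
  qed
  ultimately show ?thesis by blast
qed

lemma uniform_lsc:
  assumes X: "compact X" and sv: "set_valued_map X F" and c: "svm_continuous_on X F" and eta: "\<eta> > 0"
  shows "\<exists>\<gamma>>0. \<forall>a\<in>X. \<forall>b\<in>X. dist a b < \<gamma> \<longrightarrow> (\<forall>u\<in>F a. \<exists>v\<in>F b. dist u v < \<eta>)"
proof -
  have "\<forall>a\<in>X. \<exists>W. open W \<and> a \<in> W \<and> (\<forall>y\<in>W\<inter>X. \<forall>b\<in>W\<inter>X. \<forall>u\<in>F y. \<exists>v\<in>F b. dist u v < \<eta>)"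
    using local_lsc[OF sv c eta] by blast
  then obtain W where W: "\<And>a. a \<in> X \<Longrightarrow> open (W a) \<and> a \<in> W a \<and> (\<forall>y\<in>W a\<inter>X. \<forall>b\<in>W a\<inter>X. \<forall>u\<in>F y. \<exists>v\<in>F b. dist u v < \<eta>)"
    by metis
  have "X \<subseteq> \<Union>(W ` X)" using W by auto
  then obtain e where e: "0 < e" "\<And>x. x \<in> X \<Longrightarrow> \<exists>G \<in> W ` X. ball x e \<subseteq> G"
  proof -
    have "\<And>G. G \<in> W ` X \<Longrightarrow> open G" using W by auto
    then show ?thesis using Heine_Borel_lemma[OF X \<open>X \<subseteq> \<Union>(W ` X)\<close>] that by blast
  qed
  have "\<forall>a\<in>X. \<forall>b\<in>X. dist a b < e \<longrightarrow> (\<forall>u\<in>F a. \<exists>v\<in>F b. dist u v < \<eta>)"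
  proof (intro ballI impI)
    fix a b u assume a: "a \<in> X" and b: "b \<in> X" and d: "dist a b < e" and u: "u \<in> F a"
    obtain c where cX: "c \<in> X" and sub: "ball a e \<subseteq> W c" using e(2)[OF a] by auto
    have "a \<in> W c" "b \<in> W c" using sub d e(1) by auto
    then show "\<exists>v\<in>F b. dist u v < \<eta>" using W[OF cX] a b u by blast
  qed
  then show ?thesis using e(1) by blast
qed

lemma segment:
  assumes X: "compact X" and sv: "set_valued_map X F" and c: "svm_continuous_on X F"
  shows "\<eta> > 0 \<Longrightarrow> \<exists>\<delta>>0. \<forall>x. (\<forall>k\<le>N. x k \<in> X) \<and> (\<forall>k<N. infdist (x (Suc k)) (F (x k)) < \<delta>)
            \<longrightarrow> (\<exists>w\<in>Fpow F N (x 0). dist w (x N) < \<eta>)"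
proof (induction N arbitrary: \<eta>)
  case 0 then show ?case by (intro exI[of _ 1]) auto
next
  case (Suc N)
  have h2: "\<eta>/2 > 0" using Suc.prems by simp
  obtain \<gamma> where g: "\<gamma> > 0" "\<forall>a\<in>X. \<forall>b\<in>X. dist a b < \<gamma> \<longrightarrow> (\<forall>u\<in>F a. \<exists>v\<in>F b. dist u v < \<eta>/2)"
    using uniform_lsc[OF X sv c h2] by blast
  obtain \<delta>1 where d1: "\<delta>1 > 0" "\<forall>x. (\<forall>k\<le>N. x k \<in> X) \<and> (\<forall>k<N. infdist (x (Suc k)) (F (x k)) < \<delta>1)
            \<longrightarrow> (\<exists>w\<in>Fpow F N (x 0). dist w (x N) < \<gamma>)"
    using Suc.IH[OF g(1)] by blast
  show ?case
  proof (intro exI[of _ "min \<delta>1 (\<eta>/2)"] conjI allI impI)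
    show "min \<delta>1 (\<eta>/2) > 0" using d1 h2 by simp
    fix x assume H: "(\<forall>k\<le>Suc N. x k \<in> X) \<and> (\<forall>k<Suc N. infdist (x (Suc k)) (F (x k)) < min \<delta>1 (\<eta>/2))"
    then obtain w where w: "w \<in> Fpow F N (x 0)" "dist w (x N) < \<gamma>" using d1(2)[rule_format, of x] by force
    have xN: "x N \<in> X" and x0: "x 0 \<in> X" using H by auto
    have wX: "w \<in> X" using Fpow_subset[OF sv x0] w by auto
    have "infdist (x (Suc N)) (F (x N)) < \<eta>/2" using H by auto
    moreover have "F (x N) \<noteq> {}" using sv xN unfolding set_valued_map_def by auto
    ultimately obtain q where q: "q \<in> F (x N)" "dist (x (Suc N)) q < \<eta>/2" using infdist_lessE by blast
    obtain v where v: "v \<in> F w" "dist q v < \<eta>/2" proof -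
      have "dist (x N) w < \<gamma>" using w(2) by (simp add: dist_commute)
      then have "\<forall>u\<in>F (x N). \<exists>v\<in>F w. dist u v < \<eta>/2" using g(2) xN wX by blast
      then show ?thesis using q(1) that by blast
    qed
    have "v \<in> Fpow F (Suc N) (x 0)" using v w by auto
    moreover have "dist v (x (Suc N)) < \<eta>" using v q dist_triangle3[of v "x (Suc N)" q]
      by (simp add: dist_commute)
    ultimately show "\<exists>w\<in>Fpow F (Suc N) (x 0). dist w (x (Suc N)) < \<eta>" by blast
  qed
qed

lemma extend:
  assumes sv: "set_valued_map X F" and on: "svm_onto X F" and z: "pseudo_orbit X F \<delta> z"
  shows "\<exists>x. pseudo_orbit X F \<delta> x \<and> (\<forall>n. x (n + N) = z n)"
proof -
  have dpos: "\<delta> > 0" using z infdist_nonneg[of "z 1" "F (z 0)"] unfolding pseudo_orbit_def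
    by (metis One_nat_def le_less_trans)
  obtain g where g: "\<And>y. y \<in> X \<Longrightarrow> g y \<in> X \<and> y \<in> F (g y)" using on unfolding svm_onto_def by metis
  have z0: "z 0 \<in> X" using z unfolding pseudo_orbit_def by auto
  have gX: "(g ^^ m) (z 0) \<in> X" for m by (induction m) (use z0 g in auto)
  define x where "x n = (if N \<le> n then z (n - N) else (g ^^ (N - n)) (z 0))" for n
  have "x n \<in> X" for n using gX z unfolding x_def pseudo_orbit_def by auto
  moreover have "infdist (x (Suc n)) (F (x n)) < \<delta>" for n
  proof (cases "N \<le> n")
    case True
    then have "x (Suc n) = z (Suc (n - N))" "x n = z (n - N)" unfolding x_def by (auto simp: Suc_diff_le)
    then show ?thesis using z unfolding pseudo_orbit_def by auto
  next
    case False
    have "x (Suc n) \<in> F (x n)"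
    proof (cases "Suc n = N")
      case True
      then show ?thesis unfolding x_def using g[OF z0] by auto
    next
      case F2: False
      then have e: "N - n = Suc (N - Suc n)" using False by auto
      show ?thesis unfolding x_def using False F2 e g[OF gX[of "N - Suc n"]] by auto
    qed
    then show ?thesis using dpos by simp
  qed
  moreover have "\<forall>n. x (n + N) = z n" unfolding x_def by auto
  ultimately show ?thesis unfolding pseudo_orbit_def by blast
qed

lemma build:
  assumes X: "compact X" and sv: "set_valued_map X F" and c: "svm_continuous_on X F"
    and on: "svm_onto X F" and eta: "\<eta> > 0"
  shows "\<exists>\<delta>1>0. \<forall>z \<delta>. \<delta> \<le> \<delta>1 \<and> pseudo_orbit X F \<delta> z \<longrightarrow> (\<exists>x xN. pseudo_orbit X F \<delta> x \<and> (\<forall>n. x (n + N) = z n)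
        \<and> (\<forall>i. xN i \<in> Fpow F N (x i) \<and> dist (xN i) (x (i + N)) < \<eta>))"
proof -
  obtain \<delta>1 where d1: "\<delta>1 > 0" "\<forall>x. (\<forall>k\<le>N. x k \<in> X) \<and> (\<forall>k<N. infdist (x (Suc k)) (F (x k)) < \<delta>1)
            \<longrightarrow> (\<exists>w\<in>Fpow F N (x 0). dist w (x N) < \<eta>)"
    using segment[OF X sv c eta] by blast
  show ?thesis
  proof (intro exI[of _ \<delta>1] conjI allI impI)
    show "\<delta>1 > 0" by fact
    fix z \<delta> assume H: "\<delta> \<le> \<delta>1 \<and> pseudo_orbit X F \<delta> z"
    then have z: "pseudo_orbit X F \<delta> z" and dd: "\<delta> \<le> \<delta>1" by auto
    obtain x where x: "pseudo_orbit X F \<delta> x" "\<forall>n. x (n + N) = z n" using extend[OF sv on z] by blast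
    have x1: "pseudo_orbit X F \<delta>1 x" using x(1) dd unfolding pseudo_orbit_def
      by (meson less_le_trans)
    have "\<forall>i. \<exists>w. w \<in> Fpow F N (x i) \<and> dist w (x (i + N)) < \<eta>"
    proof
      fix i
      have "\<exists>w\<in>Fpow F N ((\<lambda>k. x (i + k)) 0). dist w ((\<lambda>k. x (i + k)) N) < \<eta>"
        using x1 unfolding pseudo_orbit_def by (intro d1(2)[rule_format]) auto
      then show "\<exists>w. w \<in> Fpow F N (x i) \<and> dist w (x (i + N)) < \<eta>" by (auto simp: add.commute)
    qed
    then obtain xN where "\<forall>i. xN i \<in> Fpow F N (x i) \<and> dist (xN i) (x (i + N)) < \<eta>" by metis
    then show "\<exists>x xN. pseudo_orbit X F \<delta> x \<and> (\<forall>n. x (n + N) = z n)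
        \<and> (\<forall>i. xN i \<in> Fpow F N (x i) \<and> dist (xN i) (x (i + N)) < \<eta>)" using x by blast
  qed
qed

theorem proposition3p19:
  fixes X :: "'a::metric_space set" and F :: "'a \<Rightarrow> 'a set"
  assumes "compact X"
    and "set_valued_map X F"
    and "svm_continuous_on X F"
    and "svm_onto X F"
  shows "(has_shadowing X F \<longleftrightarrow>
           (\<forall>\<epsilon>>0. \<exists>\<delta>>0. \<exists>N::nat. N \<ge> 1 \<and>
              (\<forall>x xN. pseudo_orbit X F \<delta> x \<and>
                  (\<forall>i. xN i \<in> Fpow F N (x i) \<and> dist (xN i) (x (i + N)) < \<epsilon> / 2)
                \<longrightarrow> (\<exists>y. F_orbit X F y \<and> shadowed_by \<epsilon> (\<lambda>n. x (n + N)) y))))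
       \<and> (has_shadowing X F \<longleftrightarrow>
           (\<forall>\<epsilon>>0. \<exists>\<delta>>0. \<exists>N::nat. N \<ge> 1 \<and>
              (\<forall>x xN. pseudo_orbit X F \<delta> x \<and>
                  (\<forall>i. xN i \<in> Fpow F N (x i) \<and> dist (xN i) (x (i + N)) < \<epsilon> / 2)
                \<longrightarrow> (\<exists>y. F_orbit X F y \<and> shadowed_by \<epsilon> xN y))))"
  (is "(?A \<longleftrightarrow> ?B) \<and> (?A \<longleftrightarrow> ?C)")
proof -
  note X = assms(1) and sv = assms(2) and c = assms(3) and on = assms(4)
  have orb_shift: "F_orbit X F (\<lambda>n. y (n + 1))" if "F_orbit X F y" for y
    using that unfolding F_orbit_def by auto
  have AB: ?B if A: ?A
  proof (intro allI impI)
    fix \<epsilon> :: real assume e: "\<epsilon> > 0"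
    obtain \<delta> where d: "\<delta> > 0" "\<forall>x. pseudo_orbit X F \<delta> x \<longrightarrow> (\<exists>y. F_orbit X F y \<and> shadowed_by \<epsilon> x y)"
      using A e unfolding has_shadowing_def by blast
    show "\<exists>\<delta>>0. \<exists>N::nat. N \<ge> 1 \<and>
              (\<forall>x xN. pseudo_orbit X F \<delta> x \<and>
                  (\<forall>i. xN i \<in> Fpow F N (x i) \<and> dist (xN i) (x (i + N)) < \<epsilon> / 2)
                \<longrightarrow> (\<exists>y. F_orbit X F y \<and> shadowed_by \<epsilon> (\<lambda>n. x (n + N)) y))"
    proof (intro exI[of _ \<delta>] exI[of _ "1::nat"] conjI allI impI)
      fix x xN assume H: "pseudo_orbit X F \<delta> x \<and> (\<forall>i. xN i \<in> Fpow F 1 (x i) \<and> dist (xN i) (x (i + 1)) < \<epsilon> / 2)"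
      then obtain y where y: "F_orbit X F y" "shadowed_by \<epsilon> x y" using d by blast
      show "\<exists>y. F_orbit X F y \<and> shadowed_by \<epsilon> (\<lambda>n. x (n + 1)) y"
        using orb_shift[OF y(1)] y(2) unfolding shadowed_by_def by blast
    qed (use d in auto)
  qed
  have AC: ?C if A: ?A
  proof (intro allI impI)
    fix \<epsilon> :: real assume e: "\<epsilon> > 0"
    obtain \<delta> where d: "\<delta> > 0" "\<forall>x. pseudo_orbit X F \<delta> x \<longrightarrow> (\<exists>y. F_orbit X F y \<and> shadowed_by (\<epsilon>/2) x y)"
      using A[unfolded has_shadowing_def, rule_format, of "\<epsilon>/2"] e by auto
    show "\<exists>\<delta>>0. \<exists>N::nat. N \<ge> 1 \<and>
              (\<forall>x xN. pseudo_orbit X F \<delta> x \<and>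
                  (\<forall>i. xN i \<in> Fpow F N (x i) \<and> dist (xN i) (x (i + N)) < \<epsilon> / 2)
                \<longrightarrow> (\<exists>y. F_orbit X F y \<and> shadowed_by \<epsilon> xN y))"
    proof (intro exI[of _ \<delta>] exI[of _ "1::nat"] conjI allI impI)
      fix x xN assume H: "pseudo_orbit X F \<delta> x \<and> (\<forall>i. xN i \<in> Fpow F 1 (x i) \<and> dist (xN i) (x (i + 1)) < \<epsilon> / 2)"
      then obtain y where y: "F_orbit X F y" "shadowed_by (\<epsilon>/2) x y" using d by blast
      have "dist (xN n) (y (n + 1)) < \<epsilon>" for n
      proof -
        have "dist (xN n) (y (n + 1)) \<le> dist (xN n) (x (n + 1)) + dist (x (n + 1)) (y (n + 1))"
          by (rule dist_triangle)
        moreover have "dist (xN n) (x (n + 1)) < \<epsilon>/2" using H by blast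
        moreover have "dist (x (n + 1)) (y (n + 1)) < \<epsilon>/2" using y(2) unfolding shadowed_by_def by blast
        ultimately show ?thesis by linarith
      qed
      then show "\<exists>y. F_orbit X F y \<and> shadowed_by \<epsilon> xN y"
        using orb_shift[OF y(1)] unfolding shadowed_by_def by blast
    qed (use d in auto)
  qed
  have BA: ?A if B: ?B
    unfolding has_shadowing_def
  proof (intro allI impI)
    fix \<epsilon> :: real assume e: "\<epsilon> > 0"
    obtain \<delta> N where dN: "\<delta> > 0" "N \<ge> (1::nat)" "\<forall>x xN. pseudo_orbit X F \<delta> x \<and>
                  (\<forall>i. xN i \<in> Fpow F N (x i) \<and> dist (xN i) (x (i + N)) < \<epsilon> / 2)
                \<longrightarrow> (\<exists>y. F_orbit X F y \<and> shadowed_by \<epsilon> (\<lambda>n. x (n + N)) y)"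
      using B e by blast
    obtain \<delta>1 where d1: "\<delta>1 > 0" "\<forall>z \<delta>'. \<delta>' \<le> \<delta>1 \<and> pseudo_orbit X F \<delta>' z \<longrightarrow> (\<exists>x xN. pseudo_orbit X F \<delta>' x \<and> (\<forall>n. x (n + N) = z n)
        \<and> (\<forall>i. xN i \<in> Fpow F N (x i) \<and> dist (xN i) (x (i + N)) < \<epsilon>/2))"
      using build[OF X sv c on, of "\<epsilon>/2" N] e by auto
    show "\<exists>\<delta>>0. \<forall>x. pseudo_orbit X F \<delta> x \<longrightarrow> (\<exists>y. F_orbit X F y \<and> shadowed_by \<epsilon> x y)"
    proof (intro exI[of _ "min \<delta> \<delta>1"] conjI allI impI)
      show "min \<delta> \<delta>1 > 0" using dN d1 by simp
      fix z assume z: "pseudo_orbit X F (min \<delta> \<delta>1) z"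
      then obtain x xN where x: "pseudo_orbit X F (min \<delta> \<delta>1) x" "\<forall>n. x (n + N) = z n"
        "\<forall>i. xN i \<in> Fpow F N (x i) \<and> dist (xN i) (x (i + N)) < \<epsilon>/2"
        using d1(2)[rule_format, of "min \<delta> \<delta>1" z] by auto
      have "pseudo_orbit X F \<delta> x" using x(1) unfolding pseudo_orbit_def
        by (meson less_le_trans min.cobounded1)
      then obtain y where "F_orbit X F y" "shadowed_by \<epsilon> (\<lambda>n. x (n + N)) y" using dN(3) x(3) by blast
      then show "\<exists>y. F_orbit X F y \<and> shadowed_by \<epsilon> z y" using x(2) by auto
    qed
  qed
  have CA: ?A if C: ?C
    unfolding has_shadowing_def
  proof (intro allI impI)
    fix \<epsilon> :: real assume e: "\<epsilon> > 0"
    obtain \<delta> N where dN: "\<delta> > 0" "N \<ge> (1::nat)" "\<forall>x xN. pseudo_orbit X F \<delta> x \<and>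
                  (\<forall>i. xN i \<in> Fpow F N (x i) \<and> dist (xN i) (x (i + N)) < (\<epsilon>/2) / 2)
                \<longrightarrow> (\<exists>y. F_orbit X F y \<and> shadowed_by (\<epsilon>/2) xN y)"
      using C[rule_format, of "\<epsilon>/2"] e by auto
    obtain \<delta>1 where d1: "\<delta>1 > 0" "\<forall>z \<delta>'. \<delta>' \<le> \<delta>1 \<and> pseudo_orbit X F \<delta>' z \<longrightarrow> (\<exists>x xN. pseudo_orbit X F \<delta>' x \<and> (\<forall>n. x (n + N) = z n)
        \<and> (\<forall>i. xN i \<in> Fpow F N (x i) \<and> dist (xN i) (x (i + N)) < (\<epsilon>/2)/2))"
      using build[OF X sv c on, of "(\<epsilon>/2)/2" N] e by auto
    show "\<exists>\<delta>>0. \<forall>x. pseudo_orbit X F \<delta> x \<longrightarrow> (\<exists>y. F_orbit X F y \<and> shadowed_by \<epsilon> x y)"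
    proof (intro exI[of _ "min \<delta> \<delta>1"] conjI allI impI)
      show "min \<delta> \<delta>1 > 0" using dN d1 by simp
      fix z assume z: "pseudo_orbit X F (min \<delta> \<delta>1) z"
      then obtain x xN where x: "pseudo_orbit X F (min \<delta> \<delta>1) x" "\<forall>n. x (n + N) = z n"
        "\<forall>i. xN i \<in> Fpow F N (x i) \<and> dist (xN i) (x (i + N)) < (\<epsilon>/2)/2"
        using d1(2)[rule_format, of "min \<delta> \<delta>1" z] by auto
      have "pseudo_orbit X F \<delta> x" using x(1) unfolding pseudo_orbit_def
        by (meson less_le_trans min.cobounded1)
      then obtain y where y: "F_orbit X F y" "shadowed_by (\<epsilon>/2) xN y" using dN(3) x(3) by blast
      have "dist (z n) (y n) < \<epsilon>" for n
      proof -
        have "dist (x (n + N)) (y n) \<le> dist (x (n + N)) (xN n) + dist (xN n) (y n)"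
          by (rule dist_triangle)
        moreover have "dist (x (n + N)) (xN n) < (\<epsilon>/2)/2" using x(3) by (simp add: dist_commute)
        moreover have "dist (xN n) (y n) < \<epsilon>/2" using y(2) unfolding shadowed_by_def by blast
        ultimately have "dist (x (n + N)) (y n) < \<epsilon>" using e by linarith
        then show ?thesis using x(2) by simp
      qed
      then show "\<exists>y. F_orbit X F y \<and> shadowed_by \<epsilon> z y" using y(1) unfolding shadowed_by_def by blast
    qed
  qed
  show ?thesis using AB AC BA CA by blast
qed

end
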